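(* For all $n\ge 3$ and $0<k<n-1$, $f(n,k)=f(n,k-1)-f(n-1,k-2)$ (with $f(n-1,-1)=0$).
   Context: A complete non-ambiguous matrix (CNM) of size $n$ is an $n\times n$ matrix $M=(m_{i,j})$ with entries in $\{0,1\}$ whose support $T=\{(i,j): m_{i,j}=1\}$ (whose elements are called vertices) satisfies: (1) $(1,1)\in T$; (2) for every $p=(i,j)\in T$ with $p\neq(1,1)$, exactly one of the following holds: there is $(i',j)\in T$ with $i'<i$, or there is $(i,j')\in T$ with $j'<j$; (3) every row and every column of $M$ contains at least one vertex; (4) define the parent of $p=(i,j)\neq(1,1)$ to be $(i',j)$ with $i'<i$ maximal if such a vertex exists, and otherwise $(i,j')$ with $j'<j$ maximal; then every vertex is the parent of either zero or exactly two vertices. A vertex with no children is a leaf. A CNM of size $n$ is upper-diagonal if its leaves are exactly the positions $(i,n+1-i)$, $1\le i\le n$. For $n\ge 2$ and $0\le k\le n-2$, $f(n,k)$ is the number of upper-diagonal CNMs $M$ of size $n$ with $m_{i,n-i}=0$ for $1\le i\le k$ and $m_{k+1,n-k-1}=1$; $f(n,n-1)$ is the number of upper-diagonal CNMs of size $n$ with $m_{i,n-i}=0$ for all $1\le i\le n-1$; by convention $f(n,-1)=0$. *)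

theory Defs
  imports Main
begin

text \<open>An n x n 0/1 matrix is represented by its support T (set of positions (i,j) with
  1 <= i,j <= n and entry 1). Rows/columns are indexed 1..n.\<close>

definition parent :: "(nat \<times> nat) set \<Rightarrow> nat \<times> nat \<Rightarrow> nat \<times> nat" where
  "parent T p = (let i = fst p; j = snd p in
     if (\<exists>i'<i. (i', j) \<in> T) then (GREATEST i'. i' < i \<and> (i', j) \<in> T, j)
     else (i, GREATEST j'. j' < j \<and> (i, j') \<in> T))"

definition children :: "(nat \<times> nat) set \<Rightarrow> nat \<times> nat \<Rightarrow> (nat \<times> nat) set" where
  "children T q = {p \<in> T. p \<noteq> (1,1) \<and> parent T p = q}"

definition is_CNM :: "nat \<Rightarrow> (nat \<times> nat) set \<Rightarrow> bool" where
  "is_CNM n T \<longleftrightarrow>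
     T \<subseteq> {1..n} \<times> {1..n} \<and>
     (1,1) \<in> T \<and>
     (\<forall>(i,j)\<in>T. (i,j) \<noteq> (1,1) \<longrightarrow>
         ((\<exists>i'<i. (i',j) \<in> T) \<noteq> (\<exists>j'<j. (i,j') \<in> T))) \<and>
     (\<forall>i\<in>{1..n}. \<exists>j. (i,j) \<in> T) \<and>
     (\<forall>j\<in>{1..n}. \<exists>i. (i,j) \<in> T) \<and>
     (\<forall>q\<in>T. card (children T q) = 0 \<or> card (children T q) = 2)"

definition leaves :: "(nat \<times> nat) set \<Rightarrow> (nat \<times> nat) set" where
  "leaves T = {q \<in> T. children T q = {}}"

definition upper_diagonal_CNM :: "nat \<Rightarrow> (nat \<times> nat) set \<Rightarrow> bool" where
  "upper_diagonal_CNM n T \<longleftrightarrow> is_CNM n T \<and> leaves T = {(i, n + 1 - i) | i. 1 \<le> i \<and> i \<le> n}"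

text \<open>f n k, with k an integer; f n (-1) = 0 by convention; defined for n >= 2 and
  -1 <= k <= n-1 (value 0 outside that range, never used).\<close>
definition f :: "nat \<Rightarrow> int \<Rightarrow> int" where
  "f n k =
    (if k = -1 then 0
     else if 0 \<le> k \<and> k \<le> int n - 2 then
       int (card {T. upper_diagonal_CNM n T \<and>
                    (\<forall>i. 1 \<le> i \<and> i \<le> nat k \<longrightarrow> (i, n - i) \<notin> T) \<and>
                    (nat k + 1, n - nat k - 1) \<in> T})
     else if k = int n - 1 then
       int (card {T. upper_diagonal_CNM n T \<and>
                    (\<forall>i. 1 \<le> i \<and> i \<le> n - 1 \<longrightarrow> (i, n - i) \<notin> T)})
     else 0)"

end

theory Submission
  imports Defs
begin


definition above :: "(nat \<times> nat) set \<Rightarrow> nat \<times> nat \<Rightarrow> bool" where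
  "above T p \<longleftrightarrow> (\<exists>i'<fst p. (i', snd p) \<in> T)"
definition left :: "(nat \<times> nat) set \<Rightarrow> nat \<times> nat \<Rightarrow> bool" where
  "left T p \<longleftrightarrow> (\<exists>j'<snd p. (fst p, j') \<in> T)"
definition rel :: "(nat \<times> nat) set \<Rightarrow> nat \<times> nat \<Rightarrow> nat \<times> nat \<Rightarrow> bool" where
  "rel T p r \<longleftrightarrow> (if above T p then snd r = snd p \<and> fst r < fst p \<and> r \<in> T \<and>
       (\<forall>i'. fst r < i' \<and> i' < fst p \<longrightarrow> (i', snd p) \<notin> T)
     else fst r = fst p \<and> snd r < snd p \<and> r \<in> T \<and>
       (\<forall>j'. snd r < j' \<and> j' < snd p \<longrightarrow> (fst p, j') \<notin> T))"
definition cond2 :: "(nat \<times> nat) set \<Rightarrow> bool" where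
  "cond2 T \<longleftrightarrow> (\<forall>p\<in>T. p \<noteq> (1,1) \<longrightarrow> above T p \<noteq> left T p)"
definition ch :: "(nat \<times> nat) set \<Rightarrow> nat \<times> nat \<Rightarrow> (nat \<times> nat) set" where
  "ch T r = {p \<in> T. p \<noteq> (1,1) \<and> rel T p r}"
definition lv :: "(nat \<times> nat) set \<Rightarrow> (nat \<times> nat) set" where
  "lv T = {r \<in> T. ch T r = {}}"

lemma greatest_char:
  fixes P :: "nat \<Rightarrow> bool"
  assumes "P z" "\<And>y. P y \<Longrightarrow> y \<le> b"
  shows "Greatest P = m \<longleftrightarrow> P m \<and> (\<forall>y. P y \<longrightarrow> y \<le> m)"
proof
  assume "Greatest P = m"
  moreover have "P (Greatest P)" using GreatestI_nat[of P z b] assms by blast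
  moreover have "\<forall>y. P y \<longrightarrow> y \<le> Greatest P" using Greatest_le_nat[of P _ b] assms by blast
  ultimately show "P m \<and> (\<forall>y. P y \<longrightarrow> y \<le> m)" by blast
next
  assume "P m \<and> (\<forall>y. P y \<longrightarrow> y \<le> m)" thus "Greatest P = m" by (intro Greatest_equality) auto
qed

lemma parent_rel:
  assumes "above T p \<or> left T p"
  shows "parent T p = r \<longleftrightarrow> rel T p r"
proof -
  obtain i j where p: "p = (i,j)" by fastforce
  obtain r1 r2 where r: "r = (r1,r2)" by fastforce
  show ?thesis
  proof (cases "above T p")
    case True
    then obtain x where x: "x < i" "(x,j) \<in> T" unfolding above_def p by auto
    have "Greatest (\<lambda>i'. i' < i \<and> (i', j) \<in> T) = r1 \<longleftrightarrow>
       (r1 < i \<and> (r1,j) \<in> T) \<and> (\<forall>y. y < i \<and> (y,j) \<in> T \<longrightarrow> y \<le> r1)"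
      by (rule greatest_char[where z = x and b = i]) (use x in auto)
    then show ?thesis using True x unfolding parent_def rel_def p r above_def
      by (auto simp: Let_def not_le)
  next
    case False
    then have L: "left T p" using assms by auto
    then obtain x where x: "x < j" "(i,x) \<in> T" unfolding left_def p by auto
    have "Greatest (\<lambda>j'. j' < j \<and> (i, j') \<in> T) = r2 \<longleftrightarrow>
       (r2 < j \<and> (i,r2) \<in> T) \<and> (\<forall>y. y < j \<and> (i,y) \<in> T \<longrightarrow> y \<le> r2)"
      by (rule greatest_char[where z = x and b = j]) (use x in auto)
    then show ?thesis using False x unfolding parent_def rel_def p r above_def
      by (auto simp: Let_def not_le)
  qed
qed

lemma children_ch: "cond2 T \<Longrightarrow> children T r = ch T r"
  unfolding children_def ch_def cond2_def using parent_rel by blast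

lemma is_CNM_alt: "is_CNM n T \<longleftrightarrow> T \<subseteq> {1..n} \<times> {1..n} \<and> (1,1) \<in> T \<and> cond2 T \<and>
   (\<forall>i\<in>{1..n}. \<exists>j. (i,j) \<in> T) \<and> (\<forall>j\<in>{1..n}. \<exists>i. (i,j) \<in> T) \<and>
   (\<forall>r\<in>T. card (ch T r) = 0 \<or> card (ch T r) = 2)"
proof -
  have c: "cond2 T \<longleftrightarrow> (\<forall>(i,j)\<in>T. (i,j) \<noteq> (1,1) \<longrightarrow>
         ((\<exists>i'<i. (i',j) \<in> T) \<noteq> (\<exists>j'<j. (i,j') \<in> T)))"
    unfolding cond2_def above_def left_def by (simp add: case_prod_beta prod_eq_iff)
  show ?thesis unfolding is_CNM_def c[symmetric] using children_ch by auto
qed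

lemma leaves_alt: "cond2 T \<Longrightarrow> leaves T = lv T"
  unfolding leaves_def lv_def using children_ch by auto

lemma rel_mono: "rel T p r \<Longrightarrow> fst r \<le> fst p \<and> snd r \<le> snd p \<and> fst r + snd r < fst p + snd p"
  unfolding rel_def by (auto split: if_splits)

lemma region:
  assumes "upper_diagonal_CNM n T" "(i,j) \<in> T"
  shows "i + j \<le> n + 1"
proof -
  have C: "is_CNM n T" and L: "leaves T = {(i, n + 1 - i) | i. 1 \<le> i \<and> i \<le> n}"
    using assms(1) unfolding upper_diagonal_CNM_def by auto
  have B: "T \<subseteq> {1..n} \<times> {1..n}" "cond2 T" and CC: "\<forall>r\<in>T. card (ch T r) = 0 \<or> card (ch T r) = 2"
    using C unfolding is_CNM_alt by auto
  have L2: "lv T = {(i, n + 1 - i) | i. 1 \<le> i \<and> i \<le> n}" using L leaves_alt[OF B(2)] by simp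
  have "\<forall>p. 2*n - (fst p + snd p) = m \<longrightarrow> p \<in> T \<longrightarrow> (\<exists>l\<in>lv T. fst p \<le> fst l \<and> snd p \<le> snd l)" for m
  proof (induction m rule: less_induct)
    case (less m)
    show ?case
    proof (intro allI impI)
      fix p assume pm: "2*n - (fst p + snd p) = m" and pT: "p \<in> T"
      show "\<exists>l\<in>lv T. fst p \<le> fst l \<and> snd p \<le> snd l"
      proof (cases "ch T p = {}")
        case True thus ?thesis using pT unfolding lv_def by (intro bexI[of _ p]) auto
      next
        case False
        then obtain p' where p': "p' \<in> T" "rel T p' p" unfolding ch_def by auto
        have bx: "fst p' \<le> n" "snd p' \<le> n" using B(1) p'(1) by auto
        have mo: "fst p \<le> fst p' \<and> snd p \<le> snd p' \<and> fst p + snd p < fst p' + snd p'" using rel_mono[OF p'(2)] .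
        have "2*n - (fst p' + snd p') < m" using pm bx mo by linarith
        with less.IH obtain l where "l \<in> lv T" "fst p' \<le> fst l \<and> snd p' \<le> snd l" using p'(1) by blast
        thus ?thesis using mo by (meson le_trans)
      qed
    qed
  qed
  then obtain l where "l \<in> lv T" "i \<le> fst l" "j \<le> snd l" using assms(2) by fastforce
  then show ?thesis using L2 by auto
qed



locale cherry = fixes N k :: nat assumes k1: "1 \<le> k" and kN: "k \<le> N"
begin
definition "c = N + 2 - k"
definition g :: "nat \<Rightarrow> nat" where "g i = (if i \<le> k then i else Suc i)"
definition h :: "nat \<Rightarrow> nat" where "h j = (if j < c then j else Suc j)"
definition E :: "nat \<times> nat \<Rightarrow> nat \<times> nat" where "E p = (g (fst p), h (snd p))"
definition "a = (k, c)"
definition "b = (Suc k, N + 1 - k)"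
definition "q = (k, N + 1 - k)"

lemma c_facts: "N + 1 - k < c" "c \<le> N + 1" "2 \<le> c" "c = N + 2 - k" "k + c = N + 2"
  using k1 kN unfolding c_def by auto

lemma g_less[simp]: "g x < g y \<longleftrightarrow> x < y" unfolding g_def by auto
lemma g_eq[simp]: "g x = g y \<longleftrightarrow> x = y" unfolding g_def by auto
lemma h_less[simp]: "h x < h y \<longleftrightarrow> x < y" unfolding h_def by auto
lemma h_eq[simp]: "h x = h y \<longleftrightarrow> x = y" unfolding h_def by auto
lemma g_ne[simp]: "g x \<noteq> Suc k" unfolding g_def by auto
lemma h_ne[simp]: "h y \<noteq> c" unfolding h_def by auto
lemma g_ne'[simp]: "Suc k \<noteq> g x" unfolding g_def by auto
lemma h_ne'[simp]: "c \<noteq> h y" unfolding h_def by auto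
lemma E_eq[simp]: "E p = E p' \<longleftrightarrow> p = p'" unfolding E_def by (auto simp: prod_eq_iff)
lemma inj_E: "inj E" by (auto intro: injI)
lemma E_ne_a[simp]: "E p \<noteq> a" unfolding E_def a_def by auto
lemma E_ne_b[simp]: "E p \<noteq> b" unfolding E_def b_def by auto
lemma E_ne_a'[simp]: "a \<noteq> E p" "b \<noteq> E p" using E_ne_a E_ne_b by metis+
lemma a_ne_b[simp]: "a \<noteq> b" "b \<noteq> a" unfolding a_def b_def by auto
lemma Eq[simp]: "E q = q" unfolding E_def q_def g_def h_def using c_facts by auto
lemma E11[simp]: "E (1,1) = (1,1)" unfolding E_def g_def h_def using c_facts k1 by auto
lemma E_11_iff[simp]: "E p = (1,1) \<longleftrightarrow> p = (1,1)" using E_eq E11 by metis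
lemma a11[simp]: "a \<noteq> (1,1)" "b \<noteq> (1,1)" unfolding a_def b_def using c_facts k1 by auto
lemma q_ne[simp]: "q \<noteq> a" "q \<noteq> b" unfolding a_def b_def q_def using c_facts by auto

lemma g_sur: "x \<noteq> Suc k \<Longrightarrow> \<exists>i. g i = x"
  unfolding g_def by (cases "x \<le> k") (auto intro: exI[of _ "x - 1"])
lemma h_sur: "y \<noteq> c \<Longrightarrow> \<exists>j. h j = y"
  unfolding h_def using c_facts by (cases "y < c") (auto intro: exI[of _ "y - 1"])

lemma E_mem_Ins: "E p \<in> E ` T \<union> {a, b} \<longleftrightarrow> p \<in> T"
  by (auto simp: inj_image_mem_iff[OF inj_E])

end

locale cherry2 = cherry +
  fixes T :: "(nat \<times> nat) set"
  assumes R: "\<And>i j. (i,j) \<in> T \<Longrightarrow> i + j \<le> N + 1" and qT: "q \<in> T" and finT: "finite T"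
begin

definition "S = E ` T \<union> {a, b}"

lemma memS: "x \<in> S \<longleftrightarrow> (\<exists>p\<in>T. x = E p) \<or> x = a \<or> x = b"
  unfolding S_def by auto

lemma E_mem[simp]: "E p \<in> S \<longleftrightarrow> p \<in> T"
  unfolding S_def by (rule E_mem_Ins)
lemma a_mem[simp]: "a \<in> S" and b_mem[simp]: "b \<in> S" and q_mem[simp]: "q \<in> S"
  using E_mem[of q] qT unfolding S_def by auto

lemma above_E: assumes "p \<in> T" shows "above S (E p) \<longleftrightarrow> above T p"
proof -
  obtain i j where p: "p = (i,j)" by fastforce
  have Rij: "i + j \<le> N + 1" using R assms p by auto
  show ?thesis
  proof
    assume "above T p"
    then obtain i' where "i' < i" "(i',j) \<in> T" unfolding above_def p by auto
    then have "g i' < g i" "E (i',j) \<in> S" by auto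
    then have "g i' < g i" "(g i', h j) \<in> S" unfolding E_def by auto
    then show "above S (E p)" unfolding above_def p E_def fst_conv snd_conv by blast
  next
    assume "above S (E p)"
    then obtain x where x: "x < g i" "(x, h j) \<in> S" unfolding above_def p E_def by auto
    from x(2) consider (e) p' where "p' \<in> T" "(x, h j) = E p'" | (a) "(x, h j) = a" | (b) "(x, h j) = b"
      unfolding memS by blast
    then show "above T p"
    proof cases
      case e
      then obtain i' where "(i', j) \<in> T" "g i' = x" unfolding E_def by (cases p') auto
      then show ?thesis using x(1) unfolding above_def p by auto
    next
      case a then show ?thesis unfolding a_def by auto
    next
      case b
      then have "x = Suc k" "h j = N + 1 - k" unfolding b_def by auto
      then show ?thesis using x(1) Rij c_facts unfolding h_def g_def by (auto split: if_splits)
    qed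
  qed
qed

lemma left_E: assumes "p \<in> T" shows "left S (E p) \<longleftrightarrow> left T p"
proof -
  obtain i j where p: "p = (i,j)" by fastforce
  have Rij: "i + j \<le> N + 1" using R assms p by auto
  show ?thesis
  proof
    assume "left T p"
    then obtain j' where "j' < j" "(i,j') \<in> T" unfolding left_def p by auto
    then have "h j' < h j" "E (i,j') \<in> S" by auto
    then have "h j' < h j" "(g i, h j') \<in> S" unfolding E_def by auto
    then show "left S (E p)" unfolding left_def p E_def fst_conv snd_conv by blast
  next
    assume "left S (E p)"
    then obtain y where y: "y < h j" "(g i, y) \<in> S" unfolding left_def p E_def by auto
    from y(2) consider (e) p' where "p' \<in> T" "(g i, y) = E p'" | (a) "(g i, y) = a" | (b) "(g i, y) = b"
      unfolding memS by blast
    then show "left T p"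
    proof cases
      case e
      then obtain j' where "(i, j') \<in> T" "h j' = y" unfolding E_def by (cases p') auto
      then show ?thesis using y(1) unfolding left_def p by auto
    next
      case a
      then have "g i = k" "y = c" unfolding a_def by auto
      then show ?thesis using y(1) Rij c_facts unfolding h_def g_def by (auto split: if_splits)
    next
      case b then show ?thesis unfolding b_def by auto
    qed
  qed
qed

lemma above_a: "\<not> above S a"
proof
  assume "above S a"
  then obtain x where x: "x < k" "(x, c) \<in> S" unfolding above_def a_def by auto
  then show False unfolding memS using c_facts by (auto simp: E_def a_def b_def)
qed

lemma left_a: "left S a"
  using q_mem c_facts unfolding left_def a_def q_def by auto

lemma above_b: "above S b"
  using q_mem unfolding above_def b_def q_def by auto

lemma left_b: "\<not> left S b"
proof
  assume "left S b"
  then obtain y where y: "y < N + 1 - k" "(Suc k, y) \<in> S" unfolding left_def b_def by auto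
  then show False unfolding memS by (auto simp: E_def a_def b_def)
qed

lemma cond2_iff: "cond2 S \<longleftrightarrow> cond2 T"
proof
  assume "cond2 S"
  show "cond2 T" unfolding cond2_def
  proof (intro ballI impI)
    fix p assume "p \<in> T" "p \<noteq> (1,1)"
    then have "E p \<in> S" "E p \<noteq> (1,1)" by (metis E_11_iff E_mem)+
    then have "above S (E p) \<noteq> left S (E p)" using \<open>cond2 S\<close> unfolding cond2_def by blast
    then show "above T p \<noteq> left T p" using above_E left_E \<open>p \<in> T\<close> by auto
  qed
next
  assume C: "cond2 T"
  show "cond2 S" unfolding cond2_def
  proof (intro ballI impI)
    fix x assume x: "x \<in> S" "x \<noteq> (1,1)"
    then consider (e) p where "p \<in> T" "x = E p" | (a) "x = a" | (b) "x = b" unfolding memS by blast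
    then show "above S x \<noteq> left S x"
    proof cases
      case e
      have "p \<noteq> (1,1)" using x(2) e by (metis E11)
      then have "above T p \<noteq> left T p" using C e(1) unfolding cond2_def by blast
      then show ?thesis using above_E left_E e by simp
    next
      case a then show ?thesis using above_a left_a by auto
    next
      case b then show ?thesis using above_b left_b by auto
    qed
  qed
qed

end


context cherry2 begin

lemma memE2[intro]: "(u,v) \<in> T \<Longrightarrow> (g u, h v) \<in> S"
  using E_mem[of "(u,v)"] unfolding E_def by simp

lemma col_S: assumes "(x, h j) \<in> S" "(i,j) \<in> T" "x < g i" shows "\<exists>y. x = g y \<and> (y,j) \<in> T"
proof -
  have Rij: "i + j \<le> N + 1" using R assms by auto
  from assms(1) consider (e) p' where "p' \<in> T" "(x, h j) = E p'" | (a) "(x, h j) = a" | (b) "(x, h j) = b"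
    unfolding memS by blast
  then show ?thesis
  proof cases
    case e then show ?thesis unfolding E_def by (cases p') auto
  next
    case a then show ?thesis unfolding a_def by auto
  next
    case b
    then have "x = Suc k" "h j = N + 1 - k" unfolding b_def by auto
    then show ?thesis using assms(3) Rij c_facts unfolding h_def g_def by (auto split: if_splits)
  qed
qed

lemma row_S: assumes "(g i, y) \<in> S" "(i,j) \<in> T" "y < h j" shows "\<exists>z. y = h z \<and> (i,z) \<in> T"
proof -
  have Rij: "i + j \<le> N + 1" using R assms by auto
  from assms(1) consider (e) p' where "p' \<in> T" "(g i, y) = E p'" | (a) "(g i, y) = a" | (b) "(g i, y) = b"
    unfolding memS by blast
  then show ?thesis
  proof cases
    case e then show ?thesis unfolding E_def by (cases p') auto
  next
    case a
    then have "g i = k" "y = c" unfolding a_def by auto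
    then show ?thesis using assms(3) Rij c_facts unfolding h_def g_def by (auto split: if_splits)
  next
    case b then show ?thesis unfolding b_def by auto
  qed
qed

lemma rel_E: assumes "p \<in> T" "p' \<in> T" shows "rel S (E p) (E p') \<longleftrightarrow> rel T p p'"
proof -
  obtain i j where p: "p = (i,j)" by fastforce
  obtain i' j' where p': "p' = (i',j')" by fastforce
  show ?thesis
  proof (cases "above T p")
    case True
    then have A: "above S (E p)" using above_E assms by simp
    have "(\<forall>x. g i' < x \<and> x < g i \<longrightarrow> (x, h j) \<notin> S) \<longleftrightarrow> (\<forall>y. i' < y \<and> y < i \<longrightarrow> (y, j) \<notin> T)"
    proof
      assume H: "\<forall>x. g i' < x \<and> x < g i \<longrightarrow> (x, h j) \<notin> S"
      show "\<forall>y. i' < y \<and> y < i \<longrightarrow> (y, j) \<notin> T"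
      proof (intro allI impI)
        fix y assume "i' < y \<and> y < i"
        then have "g i' < g y \<and> g y < g i" by simp
        then have "(g y, h j) \<notin> S" using H by blast
        then show "(y,j) \<notin> T" using E_mem[of "(y,j)"] unfolding E_def by simp
      qed
    next
      assume H: "\<forall>y. i' < y \<and> y < i \<longrightarrow> (y, j) \<notin> T"
      show "\<forall>x. g i' < x \<and> x < g i \<longrightarrow> (x, h j) \<notin> S"
      proof (intro allI impI notI)
        fix x assume x: "g i' < x \<and> x < g i" "(x, h j) \<in> S"
        then obtain y where "x = g y" "(y,j) \<in> T" using col_S assms(1) p by blast
        then show False using H x by auto
      qed
    qed
    then show ?thesis using True A assms unfolding rel_def p p' E_def by auto
  next
    case False
    then have A: "\<not> above S (E p)" using above_E assms by simp
    have "(\<forall>y. h j' < y \<and> y < h j \<longrightarrow> (g i, y) \<notin> S) \<longleftrightarrow> (\<forall>z. j' < z \<and> z < j \<longrightarrow> (i, z) \<notin> T)"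
    proof
      assume H: "\<forall>y. h j' < y \<and> y < h j \<longrightarrow> (g i, y) \<notin> S"
      show "\<forall>z. j' < z \<and> z < j \<longrightarrow> (i, z) \<notin> T"
      proof (intro allI impI)
        fix z assume "j' < z \<and> z < j"
        then have "h j' < h z \<and> h z < h j" by simp
        then have "(g i, h z) \<notin> S" using H by blast
        then show "(i,z) \<notin> T" using E_mem[of "(i,z)"] unfolding E_def by simp
      qed
    next
      assume H: "\<forall>z. j' < z \<and> z < j \<longrightarrow> (i, z) \<notin> T"
      show "\<forall>y. h j' < y \<and> y < h j \<longrightarrow> (g i, y) \<notin> S"
      proof (intro allI impI notI)
        fix y assume y: "h j' < y \<and> y < h j" "(g i, y) \<in> S"
        then obtain z where "y = h z" "(i,z) \<in> T" using row_S assms(1) p by blast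
        then show False using H y by auto
      qed
    qed
    then show ?thesis using False A assms unfolding rel_def p p' E_def by auto
  qed
qed

lemma rel_E_a: assumes "p \<in> T" shows "\<not> rel S (E p) a"
proof
  assume r: "rel S (E p) a"
  obtain i j where p: "p = (i,j)" by fastforce
  have Rij: "i + j \<le> N + 1" using R assms p by auto
  show False
  proof (cases "above S (E p)")
    case True then show False using r unfolding rel_def a_def E_def p by auto
  next
    case False
    then have "g i = k" "c < h j" using r unfolding rel_def a_def E_def p by auto
    then show False using Rij c_facts unfolding g_def h_def by (auto split: if_splits)
  qed
qed

lemma rel_E_b: assumes "p \<in> T" shows "\<not> rel S (E p) b"
proof
  assume r: "rel S (E p) b"
  obtain i j where p: "p = (i,j)" by fastforce
  have Rij: "i + j \<le> N + 1" using R assms p by auto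
  show False
  proof (cases "above S (E p)")
    case True
    then have "h j = N + 1 - k" "Suc k < g i" using r unfolding rel_def b_def E_def p by auto
    then show False using Rij c_facts unfolding g_def h_def by (auto split: if_splits)
  next
    case False
    then show False using r unfolding rel_def b_def E_def p by auto
  qed
qed

lemma rel_a: "rel S a r \<longleftrightarrow> r = q"
proof
  assume r: "rel S a r"
  then have r1: "fst r = k" "snd r < c" "r \<in> S" "\<forall>j'. snd r < j' \<and> j' < c \<longrightarrow> (k, j') \<notin> S"
    using above_a unfolding rel_def a_def by auto
  have "\<not> snd r < N + 1 - k" using r1(4) q_mem c_facts unfolding q_def by auto
  then have "snd r = N + 1 - k" using r1(2) c_facts by auto
  then show "r = q" using r1(1) unfolding q_def by (simp add: prod_eq_iff)
next
  assume "r = q"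
  then show "rel S a r" using above_a c_facts q_mem unfolding rel_def a_def q_def by auto
qed

lemma rel_b: "rel S b r \<longleftrightarrow> r = q"
proof
  assume r: "rel S b r"
  then have r1: "snd r = N + 1 - k" "fst r < Suc k" "r \<in> S" "\<forall>i'. fst r < i' \<and> i' < Suc k \<longrightarrow> (i', N + 1 - k) \<notin> S"
    using above_b unfolding rel_def b_def by auto
  have "\<not> fst r < k" using r1(4) q_mem unfolding q_def by auto
  then have "fst r = k" using r1(2) by auto
  then show "r = q" using r1(1) unfolding q_def by (simp add: prod_eq_iff)
next
  assume "r = q"
  then show "rel S b r" using above_b q_mem unfolding rel_def b_def q_def by auto
qed

lemma ch_E: assumes "p \<in> T" shows "ch S (E p) = E ` ch T p \<union> (if p = q then {a,b} else {})"
proof (rule set_eqI)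
  fix x
  show "x \<in> ch S (E p) \<longleftrightarrow> x \<in> E ` ch T p \<union> (if p = q then {a,b} else {})"
  proof
    assume x: "x \<in> ch S (E p)"
    then have xs: "x \<in> S" "x \<noteq> (1,1)" "rel S x (E p)" unfolding ch_def by auto
    from xs(1) consider (e) p' where "p' \<in> T" "x = E p'" | (a) "x = a" | (b) "x = b"
      unfolding memS by blast
    then show "x \<in> E ` ch T p \<union> (if p = q then {a,b} else {})"
    proof cases
      case e
      then have "p' \<noteq> (1,1)" "rel T p' p" using xs rel_E assms by (metis E11, auto)
      then show ?thesis using e unfolding ch_def by auto
    next
      case a
      then have "E p = q" using xs rel_a by auto
      then have "p = q" by (metis Eq E_eq)
      then show ?thesis using a by auto
    next
      case b
      then have "E p = q" using xs rel_b by auto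
      then have "p = q" by (metis Eq E_eq)
      then show ?thesis using b by auto
    qed
  next
    assume "x \<in> E ` ch T p \<union> (if p = q then {a,b} else {})"
    then consider (e) p' where "p' \<in> ch T p" "x = E p'" | (ab) "p = q" "x = a \<or> x = b"
      by (auto split: if_splits)
    then show "x \<in> ch S (E p)"
    proof cases
      case e
      then have "p' \<in> T" "p' \<noteq> (1,1)" "rel T p' p" unfolding ch_def by auto
      then have "E p' \<noteq> (1,1)" "rel S (E p') (E p)" using rel_E assms by (metis E_11_iff, auto)
      then show ?thesis using e \<open>p' \<in> T\<close> unfolding ch_def by auto
    next
      case ab
      then have "E p = q" by simp
      then show ?thesis using ab(2) rel_a[of q] rel_b[of q] a11 a_mem b_mem unfolding ch_def by auto
    qed
  qed
qed

lemma ch_a: "ch S a = {}"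
proof -
  have "\<not> rel S x a" if "x \<in> S" for x
    using that rel_E_a rel_a rel_b q_ne unfolding memS by metis
  then show ?thesis unfolding ch_def by auto
qed

lemma ch_b: "ch S b = {}"
proof -
  have "\<not> rel S x b" if "x \<in> S" for x
    using that rel_E_b rel_a rel_b q_ne unfolding memS by metis
  then show ?thesis unfolding ch_def by auto
qed

end


context cherry2 begin

lemma fin_ch: "finite (ch T p)" using finT unfolding ch_def by auto

lemma card_ch_E: assumes "p \<in> T" shows "card (ch S (E p)) = card (ch T p) + (if p = q then 2 else 0)"
proof -
  have ci: "card (E ` ch T p) = card (ch T p)" by (rule card_image) (use inj_E in \<open>auto simp: inj_on_def\<close>)
  show ?thesis
  proof (cases "p = q")
    case True
    have "card (E ` ch T p \<union> {a,b}) = card (E ` ch T p) + card {a,b}"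
      by (rule card_Un_disjoint) (use fin_ch in auto)
    then show ?thesis using ch_E[OF assms] True ci by simp
  next
    case False then show ?thesis using ch_E[OF assms] ci by simp
  qed
qed

lemma cards_iff: "(\<forall>x\<in>S. card (ch S x) = 0 \<or> card (ch S x) = 2) \<longleftrightarrow>
   (\<forall>p\<in>T. card (ch T p) = 0 \<or> card (ch T p) = 2) \<and> ch T q = {}"
proof
  assume H: "\<forall>x\<in>S. card (ch S x) = 0 \<or> card (ch S x) = 2"
  have "card (ch T q) = 0" using H[rule_format, of "E q"] card_ch_E[OF qT] qT by auto
  then have q0: "ch T q = {}" using fin_ch by auto
  have "card (ch T p) = 0 \<or> card (ch T p) = 2" if "p \<in> T" for p
  proof (cases "p = q")
    case True then show ?thesis using q0 by simp
  next
    case False then show ?thesis using H[rule_format, of "E p"] card_ch_E[OF that] that by auto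
  qed
  then show "(\<forall>p\<in>T. card (ch T p) = 0 \<or> card (ch T p) = 2) \<and> ch T q = {}" using q0 by auto
next
  assume H: "(\<forall>p\<in>T. card (ch T p) = 0 \<or> card (ch T p) = 2) \<and> ch T q = {}"
  show "\<forall>x\<in>S. card (ch S x) = 0 \<or> card (ch S x) = 2"
  proof
    fix x assume "x \<in> S"
    then consider (e) p where "p \<in> T" "x = E p" | (a) "x = a" | (b) "x = b" unfolding memS by blast
    then show "card (ch S x) = 0 \<or> card (ch S x) = 2"
    proof cases
      case e then show ?thesis using card_ch_E[OF e(1)] H by auto
    qed (use ch_a ch_b in auto)
  qed
qed

lemma box_iff: "T \<subseteq> {1..N} \<times> {1..N} \<longleftrightarrow> S \<subseteq> {1..Suc N} \<times> {1..Suc N}"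
proof
  assume H: "T \<subseteq> {1..N} \<times> {1..N}"
  show "S \<subseteq> {1..Suc N} \<times> {1..Suc N}"
  proof
    fix x assume "x \<in> S"
    then consider (e) p where "p \<in> T" "x = E p" | (a) "x = a" | (b) "x = b" unfolding memS by blast
    then show "x \<in> {1..Suc N} \<times> {1..Suc N}"
    proof cases
      case e then show ?thesis using H c_facts k1 kN unfolding E_def g_def h_def by (cases p) auto
    next
      case a then show ?thesis using c_facts k1 kN unfolding a_def by auto
    next
      case b then show ?thesis using c_facts k1 kN unfolding b_def by auto
    qed
  qed
next
  assume H: "S \<subseteq> {1..Suc N} \<times> {1..Suc N}"
  show "T \<subseteq> {1..N} \<times> {1..N}"
  proof
    fix p assume p: "p \<in> T"
    obtain i j where ij: "p = (i,j)" by fastforce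
    have "(g i, h j) \<in> {1..Suc N} \<times> {1..Suc N}" using H p ij by auto
    then show "p \<in> {1..N} \<times> {1..N}" using ij c_facts k1 kN unfolding g_def h_def by (auto split: if_splits)
  qed
qed

lemma one_iff: "(1,1) \<in> S \<longleftrightarrow> (1,1) \<in> T"
  by (metis E11 E_mem)


lemma rows_iff: "(\<forall>i\<in>{1..Suc N}. \<exists>j. (i,j) \<in> S) \<longleftrightarrow> (\<forall>i\<in>{1..N}. \<exists>j. (i,j) \<in> T)"
proof
  assume H: "\<forall>i\<in>{1..Suc N}. \<exists>j. (i,j) \<in> S"
  show "\<forall>i\<in>{1..N}. \<exists>j. (i,j) \<in> T"
  proof
    fix i assume i: "i \<in> {1..N}"
    have "g i \<in> {1..Suc N}" using i unfolding g_def by auto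
    then obtain y where y: "(g i, y) \<in> S" using H by blast
    then consider (e) p where "p \<in> T" "(g i, y) = E p" | (a) "(g i, y) = a" | (b) "(g i, y) = b" unfolding memS by blast
    then show "\<exists>j. (i,j) \<in> T"
    proof cases
      case e then show ?thesis unfolding E_def by (cases p) auto
    next
      case a then have "i = k" unfolding a_def g_def by (auto split: if_splits)
      then show ?thesis using qT unfolding q_def by auto
    next
      case b then show ?thesis unfolding b_def by auto
    qed
  qed
next
  assume H: "\<forall>i\<in>{1..N}. \<exists>j. (i,j) \<in> T"
  show "\<forall>i\<in>{1..Suc N}. \<exists>j. (i,j) \<in> S"
  proof
    fix x assume x: "x \<in> {1..Suc N}"
    show "\<exists>j. (x,j) \<in> S"
    proof (cases "x = Suc k")
      case True then show ?thesis using b_mem unfolding b_def by auto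
    next
      case False
      then obtain i where i: "g i = x" using g_sur by blast
      then have "i \<in> {1..N}" using x kN unfolding g_def by (auto split: if_splits)
      then obtain j where "(i,j) \<in> T" using H by blast
      then show ?thesis using i memE2 by blast
    qed
  qed
qed

lemma cols_iff: "(\<forall>j\<in>{1..Suc N}. \<exists>i. (i,j) \<in> S) \<longleftrightarrow> (\<forall>j\<in>{1..N}. \<exists>i. (i,j) \<in> T)"
proof
  assume H: "\<forall>j\<in>{1..Suc N}. \<exists>i. (i,j) \<in> S"
  show "\<forall>j\<in>{1..N}. \<exists>i. (i,j) \<in> T"
  proof
    fix j assume j: "j \<in> {1..N}"
    have "h j \<in> {1..Suc N}" using j unfolding h_def by auto
    then obtain x where x: "(x, h j) \<in> S" using H by blast
    then consider (e) p where "p \<in> T" "(x, h j) = E p" | (a) "(x, h j) = a" | (b) "(x, h j) = b" unfolding memS by blast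
    then show "\<exists>i. (i,j) \<in> T"
    proof cases
      case e then show ?thesis unfolding E_def by (cases p) auto
    next
      case a then show ?thesis unfolding a_def by auto
    next
      case b then have "j = N + 1 - k" unfolding b_def h_def using c_facts by (auto split: if_splits)
      then show ?thesis using qT unfolding q_def by auto
    qed
  qed
next
  assume H: "\<forall>j\<in>{1..N}. \<exists>i. (i,j) \<in> T"
  show "\<forall>j\<in>{1..Suc N}. \<exists>i. (i,j) \<in> S"
  proof
    fix y assume y: "y \<in> {1..Suc N}"
    show "\<exists>i. (i,y) \<in> S"
    proof (cases "y = c")
      case True then show ?thesis using a_mem unfolding a_def by auto
    next
      case False
      then obtain j where j: "h j = y" using h_sur by blast
      then have "j \<in> {1..N}" using y c_facts unfolding h_def by (auto split: if_splits)
      then obtain i where "(i,j) \<in> T" using H by blast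
      then show ?thesis using j memE2 by blast
    qed
  qed
qed

lemma CNM_iff: "is_CNM (Suc N) S \<longleftrightarrow> is_CNM N T \<and> ch T q = {}"
  unfolding is_CNM_alt using box_iff one_iff cond2_iff rows_iff cols_iff cards_iff by blast

lemma lv_S: "lv S = E ` (lv T - {q}) \<union> {a,b}"
proof (rule set_eqI)
  fix x
  show "x \<in> lv S \<longleftrightarrow> x \<in> E ` (lv T - {q}) \<union> {a,b}"
  proof
    assume "x \<in> lv S"
    then have x: "x \<in> S" "ch S x = {}" unfolding lv_def by auto
    then consider (e) p where "p \<in> T" "x = E p" | (a) "x = a" | (b) "x = b" unfolding memS by blast
    then show "x \<in> E ` (lv T - {q}) \<union> {a,b}"
    proof cases
      case e
      then have "ch T p = {}" "p \<noteq> q" using ch_E[OF e(1)] x(2) by (auto split: if_splits)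
      then show ?thesis using e unfolding lv_def by auto
    qed auto
  next
    assume "x \<in> E ` (lv T - {q}) \<union> {a,b}"
    then consider (e) p where "p \<in> lv T" "p \<noteq> q" "x = E p" | (a) "x = a" | (b) "x = b" by blast
    then show "x \<in> lv S"
    proof cases
      case e
      then have "p \<in> T" "ch T p = {}" unfolding lv_def by auto
      then show ?thesis using e ch_E unfolding lv_def by auto
    qed (use ch_a ch_b in \<open>auto simp: lv_def\<close>)
  qed
qed

end


definition DN :: "nat \<Rightarrow> (nat \<times> nat) set" where "DN M = {(i, M + 1 - i) | i. 1 \<le> i \<and> i \<le> M}"

context cherry begin

lemma setD: "E ` (DN N - {q}) \<union> {a,b} = DN (Suc N)"
proof (rule set_eqI)
  fix x
  show "x \<in> E ` (DN N - {q}) \<union> {a,b} \<longleftrightarrow> x \<in> DN (Suc N)"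
  proof
    assume "x \<in> E ` (DN N - {q}) \<union> {a,b}"
    then consider (e) i where "1 \<le> i" "i \<le> N" "i \<noteq> k" "x = E (i, N + 1 - i)" | (a) "x = a" | (b) "x = b"
      unfolding DN_def q_def by auto
    then show "x \<in> DN (Suc N)"
    proof cases
      case e
      show ?thesis
      proof (cases "i < k")
        case True
        then have "x = (i, Suc N + 1 - i)" using e c_facts unfolding E_def g_def h_def by auto
        then show ?thesis using e unfolding DN_def by auto
      next
        case False
        then have "x = (Suc i, Suc N + 1 - Suc i)" using e c_facts unfolding E_def g_def h_def by auto
        then show ?thesis using e unfolding DN_def by auto
      qed
    next
      case a then show ?thesis using k1 kN c_facts unfolding a_def DN_def by auto
    next
      case b then show ?thesis using k1 kN unfolding b_def DN_def by auto
    qed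
  next
    assume "x \<in> DN (Suc N)"
    then obtain i where i: "1 \<le> i" "i \<le> Suc N" "x = (i, Suc N + 1 - i)" unfolding DN_def by auto
    consider "i < k" | "i = k" | "i = Suc k" | "Suc k < i" by linarith
    then show "x \<in> E ` (DN N - {q}) \<union> {a,b}"
    proof cases
      case 1
      have "(i, N + 1 - i) \<in> DN N - {q}" using 1 i kN unfolding DN_def q_def by auto
      moreover have "E (i, N + 1 - i) = x" using 1 i c_facts unfolding E_def g_def h_def by auto
      ultimately show ?thesis by blast
    next
      case 2 then show ?thesis using i c_facts unfolding a_def by auto
    next
      case 3 then show ?thesis using i unfolding b_def by auto
    next
      case 4
      have "(i - 1, N + 1 - (i - 1)) \<in> DN N - {q}" using 4 i kN unfolding DN_def q_def by auto
      moreover have "E (i - 1, N + 1 - (i - 1)) = x" using 4 i c_facts unfolding E_def g_def h_def by auto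
      ultimately show ?thesis by blast
    qed
  qed
qed

lemma image_cancel: assumes "E ` A \<union> {a,b} = E ` B \<union> {a,b}" shows "A = B"
proof -
  have "x \<in> B" if "x \<in> A" "E ` A \<union> {a,b} = E ` B \<union> {a,b}" for x A B
  proof -
    have "E x \<in> E ` B \<union> {a,b}" using that by blast
    then show ?thesis by (auto simp: inj_image_mem_iff[OF inj_E])
  qed
  then show ?thesis using assms by blast
qed

lemma q_DN: "q \<in> DN N" unfolding q_def DN_def using k1 kN by auto

end

context cherry2 begin

lemma UD_iff: "upper_diagonal_CNM (Suc N) S \<longleftrightarrow> upper_diagonal_CNM N T"
proof
  assume H: "upper_diagonal_CNM (Suc N) S"
  then have CS: "is_CNM (Suc N) S" and LS: "leaves S = DN (Suc N)"
    unfolding upper_diagonal_CNM_def DN_def by auto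
  then have CT: "is_CNM N T" and q0: "ch T q = {}" using CNM_iff by auto
  have c2S: "cond2 S" and c2T: "cond2 T" using CS CT unfolding is_CNM_alt by auto
  have "E ` (lv T - {q}) \<union> {a,b} = E ` (DN N - {q}) \<union> {a,b}"
    using LS leaves_alt[OF c2S] lv_S setD by simp
  then have "lv T - {q} = DN N - {q}" by (rule image_cancel)
  moreover have "q \<in> lv T" using q0 qT unfolding lv_def by auto
  ultimately have "lv T = DN N" using q_DN by blast
  then show "upper_diagonal_CNM N T" using CT leaves_alt[OF c2T] unfolding upper_diagonal_CNM_def DN_def by auto
next
  assume H: "upper_diagonal_CNM N T"
  then have CT: "is_CNM N T" and LT: "leaves T = DN N"
    unfolding upper_diagonal_CNM_def DN_def by auto
  have c2T: "cond2 T" using CT unfolding is_CNM_alt by auto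
  have "q \<in> lv T" using LT leaves_alt[OF c2T] q_DN by simp
  then have q0: "ch T q = {}" unfolding lv_def by auto
  have CS: "is_CNM (Suc N) S" using CT q0 CNM_iff by auto
  have c2S: "cond2 S" using CS unfolding is_CNM_alt by auto
  have "leaves S = DN (Suc N)" using leaves_alt[OF c2S] lv_S LT leaves_alt[OF c2T] setD by simp
  then show "upper_diagonal_CNM (Suc N) S" using CS unfolding upper_diagonal_CNM_def DN_def by auto
qed

end

lemma UD_finite_T: "upper_diagonal_CNM n T \<Longrightarrow> finite T"
  unfolding upper_diagonal_CNM_def is_CNM_def by (meson finite_SigmaI finite_atLeastAtMost finite_subset)

lemma UD_cond2: "upper_diagonal_CNM n T \<Longrightarrow> cond2 T"
  unfolding upper_diagonal_CNM_def is_CNM_alt by auto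

lemma UD_leaves: "upper_diagonal_CNM n T \<Longrightarrow> i \<ge> 1 \<Longrightarrow> i \<le> n \<Longrightarrow> (i, n + 1 - i) \<in> T"
  unfolding upper_diagonal_CNM_def leaves_def by auto

lemma cherry_count:
  assumes "1 \<le> k" "k \<le> N"
  shows "card {S. upper_diagonal_CNM (Suc N) S \<and> (\<forall>i. 1 \<le> i \<and> i \<le> k - 1 \<longrightarrow> (i, Suc N - i) \<notin> S) \<and> (k, Suc N - k) \<in> S}
       = card {T. upper_diagonal_CNM N T \<and> (\<forall>i. 1 \<le> i \<and> i \<le> k - 2 \<longrightarrow> (i, N - i) \<notin> T)}"
    (is "card ?X = card ?Y")
proof -
  interpret cherry N k using assms by unfold_locales
  let ?Ins = "\<lambda>T. E ` T \<union> {a,b}"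
  have inj: "inj_on ?Ins ?Y" by (rule inj_onI) (rule image_cancel)
  have "?X = ?Ins ` ?Y"
  proof (rule set_eqI, rule iffI)
    fix S assume "S \<in> ?X"
    then have UD: "upper_diagonal_CNM (Suc N) S" and XC: "\<forall>i. 1 \<le> i \<and> i \<le> k - 1 \<longrightarrow> (i, Suc N - i) \<notin> S"
       and qS: "(k, Suc N - k) \<in> S" by auto
    have regS: "\<And>i j. (i,j) \<in> S \<Longrightarrow> i + j \<le> Suc N + 1" using region[OF UD] by blast
    have c2: "cond2 S" using UD_cond2[OF UD] .
    have aS: "a \<in> S" using UD_leaves[OF UD, of k] k1 kN c_facts unfolding a_def by auto
    have bS: "b \<in> S" using UD_leaves[OF UD, of "Suc k"] k1 kN unfolding b_def by auto
    have qS': "q \<in> S" using qS unfolding q_def by simp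
    define T where "T = E -` S"
    have ST: "S = ?Ins T"
    proof (rule set_eqI, rule iffI)
      fix x assume xS: "x \<in> S"
      obtain i j where x: "x = (i,j)" by fastforce
      show "x \<in> ?Ins T"
      proof (cases "i = Suc k")
        case True
        have "j \<le> N + 1 - k" using regS xS x True by fastforce
        moreover have "\<not> j < N + 1 - k"
        proof
          assume "j < N + 1 - k"
          then have "left S b" using xS x True unfolding left_def b_def by auto
          moreover have "above S b" using qS' unfolding above_def b_def q_def by auto
          ultimately show False using c2 bS unfolding cond2_def using a11 by blast
        qed
        ultimately show ?thesis using x True unfolding b_def by auto
      next
        case False
        show ?thesis
        proof (cases "j = c")
          case True
          have "i \<le> k" using regS xS x True c_facts by fastforce
          moreover have "\<not> i < k"
          proof
            assume "i < k"
            then have "above S a" using xS x True unfolding above_def a_def by auto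
            moreover have "left S a" using qS' c_facts unfolding left_def a_def q_def by auto
            ultimately show False using c2 aS unfolding cond2_def using a11 by blast
          qed
          ultimately show ?thesis using x True unfolding a_def by auto
        next
          case False2: False
          obtain i' where "g i' = i" using g_sur False by blast
          moreover obtain j' where "h j' = j" using h_sur False2 by blast
          ultimately have "x = E (i',j')" using x unfolding E_def by auto
          then show ?thesis using xS unfolding T_def by auto
        qed
      qed
    next
      fix x assume "x \<in> ?Ins T"
      then show "x \<in> S" using aS bS unfolding T_def by auto
    qed
    have finS: "finite S" using UD_finite_T[OF UD] .
    have loc: "cherry2 N k T"
    proof
      show "\<And>i j. (i,j) \<in> T \<Longrightarrow> i + j \<le> N + 1"
      proof -
        fix i j assume "(i,j) \<in> T"
        then have "(g i, h j) \<in> S" unfolding T_def E_def by auto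
        then have "g i + h j \<le> N + 2" using regS by fastforce
        then show "i + j \<le> N + 1" using c_facts unfolding g_def h_def by (auto split: if_splits)
      qed
      show "q \<in> T" using qS' unfolding T_def by simp
      show "finite T" unfolding T_def using finS inj_E by (rule finite_vimageI)
    qed
    interpret C: cherry2 N k T by (rule loc)
    have "upper_diagonal_CNM N T" using C.UD_iff UD ST unfolding C.S_def by simp
    moreover have "\<forall>i. 1 \<le> i \<and> i \<le> k - 2 \<longrightarrow> (i, N - i) \<notin> T"
    proof (intro allI impI notI)
      fix i assume i: "1 \<le> i \<and> i \<le> k - 2" "(i, N - i) \<in> T"
      then have "E (i, N - i) \<in> S" unfolding T_def by auto
      moreover have "i \<le> N" using i kN by linarith
      moreover have "E (i, N - i) = (i, Suc N - i)" using i \<open>i \<le> N\<close> c_facts unfolding E_def g_def h_def by (auto simp: Suc_diff_le)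
      ultimately show False using XC i by auto
    qed
    ultimately show "S \<in> ?Ins ` ?Y" using ST by blast
  next
    fix S assume "S \<in> ?Ins ` ?Y"
    then obtain T where T: "upper_diagonal_CNM N T" "\<forall>i. 1 \<le> i \<and> i \<le> k - 2 \<longrightarrow> (i, N - i) \<notin> T"
      and ST: "S = ?Ins T" by auto
    have loc: "cherry2 N k T"
    proof
      show "\<And>i j. (i,j) \<in> T \<Longrightarrow> i + j \<le> N + 1" using region[OF T(1)] by blast
      show "q \<in> T" using UD_leaves[OF T(1), of k] k1 kN unfolding q_def by auto
      show "finite T" using UD_finite_T[OF T(1)] .
    qed
    interpret C: cherry2 N k T by (rule loc)
    have S: "S = C.S" unfolding C.S_def ST ..
    have "upper_diagonal_CNM (Suc N) S" using C.UD_iff T(1) S by simp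
    moreover have "(k, Suc N - k) \<in> S" using C.q_mem S unfolding q_def by simp
    moreover have "\<forall>i. 1 \<le> i \<and> i \<le> k - 1 \<longrightarrow> (i, Suc N - i) \<notin> S"
    proof (intro allI impI notI)
      fix i assume i: "1 \<le> i \<and> i \<le> k - 1" "(i, Suc N - i) \<in> S"
      then consider (e) p where "p \<in> T" "(i, Suc N - i) = E p" | (a) "(i, Suc N - i) = a" | (b) "(i, Suc N - i) = b"
        using S C.memS by blast
      then show False
      proof cases
        case e
        obtain i' j' where p: "p = (i', j')" by fastforce
        have gi: "g i' = i" and hj: "h j' = Suc N - i" using e p unfolding E_def by auto
        have "i' = i" using gi i k1 unfolding g_def by (auto split: if_splits)
        have "j' \<ge> c" using hj i c_facts unfolding h_def by (auto split: if_splits)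
        then have "j' = N - i" using hj i kN unfolding h_def by auto
        then show False using \<open>j' \<ge> c\<close> i c_facts T(2) e p \<open>i' = i\<close> by (cases "i \<le> k - 2") auto
      next
        case a then show False using i k1 unfolding a_def by auto
      next
        case b then show False using i unfolding b_def by auto
      qed
    qed
    ultimately show "S \<in> ?X" by blast
  qed
  then show ?thesis using card_image[OF inj] by simp
qed



definition Bc :: "nat \<Rightarrow> nat \<Rightarrow> nat" where
  "Bc M j = card {T. upper_diagonal_CNM M T \<and> (\<forall>i. 1 \<le> i \<and> i \<le> j \<longrightarrow> (i, M - i) \<notin> T)}"

lemma split_count:
  "Bc M j = Bc M (Suc j) + card {T. upper_diagonal_CNM M T \<and> (\<forall>i. 1 \<le> i \<and> i \<le> j \<longrightarrow> (i, M - i) \<notin> T) \<and> (Suc j, M - Suc j) \<in> T}"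
proof -
  let ?A = "{T. upper_diagonal_CNM M T \<and> (\<forall>i. 1 \<le> i \<and> i \<le> j \<longrightarrow> (i, M - i) \<notin> T)}"
  let ?B = "{T. upper_diagonal_CNM M T \<and> (\<forall>i. 1 \<le> i \<and> i \<le> Suc j \<longrightarrow> (i, M - i) \<notin> T)}"
  let ?C = "{T. upper_diagonal_CNM M T \<and> (\<forall>i. 1 \<le> i \<and> i \<le> j \<longrightarrow> (i, M - i) \<notin> T) \<and> (Suc j, M - Suc j) \<in> T}"
  have fin: "finite {T. upper_diagonal_CNM M T}"
  proof (rule finite_subset)
    show "{T. upper_diagonal_CNM M T} \<subseteq> Pow ({1..M} \<times> {1..M})"
      unfolding upper_diagonal_CNM_def is_CNM_def by auto
  qed auto
  have "?A = ?B \<union> ?C" using le_Suc_eq by auto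
  moreover have "?B \<inter> ?C = {}" by auto
  moreover have "finite ?B" "finite ?C" using fin by (auto intro: finite_subset)
  ultimately have "card ?A = card ?B + card ?C" by (simp add: card_Un_disjoint)
  then show ?thesis unfolding Bc_def .
qed

theorem lemma4p8:
  fixes n :: nat and k :: int
  assumes "n \<ge> 3" and "0 < k" and "k < int n - 1"
  shows "f n k = f n (k - 1) - f (n - 1) (k - 2)"
proof -
  obtain N where n: "n = Suc N" using assms(1) by (cases n) auto
  obtain K where K: "k = int K" using assms(2) by (metis zero_le_imp_eq_int less_imp_le)
  have K1: "1 \<le> K" and KN: "K + 1 \<le> N" using assms K n by auto
  have h1: "f n k = int (Bc N (K - 1))"
  proof -
    have "f n k = int (card {T. upper_diagonal_CNM (Suc N) T \<and> (\<forall>i. 1 \<le> i \<and> i \<le> K \<longrightarrow> (i, Suc N - i) \<notin> T)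
        \<and> (K + 1, Suc N - K - 1) \<in> T})"
      unfolding f_def using K n K1 KN by auto
    also have "\<dots> = int (Bc N (K - 1))"
      using cherry_count[of "K + 1" N] K1 KN unfolding Bc_def by simp
    finally show ?thesis .
  qed
  have h2: "f n (k - 1) = int (Bc N (K - 2))"
  proof -
    have e: "k - 1 = int (K - 1)" using K K1 by auto
    have "f n (k - 1) = int (card {T. upper_diagonal_CNM (Suc N) T \<and> (\<forall>i. 1 \<le> i \<and> i \<le> K - 1 \<longrightarrow> (i, Suc N - i) \<notin> T)
        \<and> (K - 1 + 1, Suc N - (K - 1) - 1) \<in> T})"
      using n K1 KN K by (auto simp: f_def nat_diff_distrib' Suc_diff_le)
    also have "\<dots> = int (Bc N (K - 2))"
      using cherry_count[of K N] K1 KN unfolding Bc_def by simp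
    finally show ?thesis .
  qed
  show ?thesis
  proof (cases "K = 1")
    case True
    then have "f (n - 1) (k - 2) = 0" unfolding f_def using K by simp
    then show ?thesis using h1 h2 True by simp
  next
    case False
    then have K2: "2 \<le> K" using K1 by auto
    have e: "k - 2 = int (K - 2)" using K K2 by auto
    have "f (n - 1) (k - 2) = int (card {T. upper_diagonal_CNM N T \<and> (\<forall>i. 1 \<le> i \<and> i \<le> K - 2 \<longrightarrow> (i, N - i) \<notin> T)
        \<and> (K - 2 + 1, N - (K - 2) - 1) \<in> T})"
    proof -
      have x: "nat (int K - 2) = K - 2" using K2 by auto
      have y: "N - Suc (K - 2) = Suc N - K" using K2 KN by auto
      show ?thesis unfolding f_def K using n K2 KN by (simp add: x y)
    qed
    also have "\<dots> = int (Bc N (K - 2)) - int (Bc N (K - 1))"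
    proof -
      have z: "Suc (K - 2) = K - 1" using K2 by auto
      have w: "N - Suc (K - 2) = Suc N - K" using K2 KN by auto
      show ?thesis using split_count[of N "K - 2"] by (simp add: z)
    qed
    finally show ?thesis using h1 h2 by simp
  qed
qed

end
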